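(* Let $\mathcal{K}$ be a finite set of arms, $C_0\ge 10$, $t_0=2C_0|\mathcal{K}|$ and $T>\frac{(t_0+1)^2}{e^2}$. Under the $\epsilon$-decay random sampling method, for each arm $k\in\mathcal{K}$ the number $n_k$ of random samples of arm $k$ drawn up to time $T$ satisfies $$C_0(1+\log(T+1)-\log(t_0+1))\le n_k \le3C_0(1+\log(T)-\log(t_0))$$ with probability at least $1-\frac{2}{T+1}$.
   Context: $\epsilon$-decay random sampling method: at each time $t=1,2,\dots$, independently of everything else, the decision-maker draws a random sample with probability $\min\{1,t_0/t\}$; when a random sample is drawn, an arm is selected uniformly at random from $\mathcal{K}$ (each with probability $1/|\mathcal{K}|$). $n_k$ is the number of times $t\le T$ at which a random sample was drawn and arm $k$ was selected. *)

theory Defs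
  imports "HOL-Probability.Probability"
begin

definition eps_step :: "'a set \<Rightarrow> real \<Rightarrow> nat \<Rightarrow> 'a option pmf" where
  "eps_step K t0 t =
     bernoulli_pmf (min 1 (t0 / real t)) \<bind>
       (\<lambda>b. if b then map_pmf Some (pmf_of_set K) else return_pmf None)"

definition eps_decay :: "'a set \<Rightarrow> real \<Rightarrow> nat \<Rightarrow> (nat \<Rightarrow> 'a option) pmf" where
  "eps_decay K t0 T = Pi_pmf {1..T} None (eps_step K t0)"

definition n_count :: "nat \<Rightarrow> 'a \<Rightarrow> (nat \<Rightarrow> 'a option) \<Rightarrow> nat" where
  "n_count T k \<omega> = card {t \<in> {1..T}. \<omega> t = Some k}"

end

theory Submission
  imports Defs
begin


lemma ln15: "0.402 \<le> ln (3/2::real)"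
proof -
  have "(1 - 0.402 / real (32::nat)) ^ 32 \<le> exp (-0.402::real)"
    by (rule exp_ge_one_minus_x_over_n_power_n) auto
  moreover have "(2/3::real) \<le> (1 - 0.402 / real (32::nat)) ^ 32" by (simp add: power_numeral_reduce)
  ultimately have "2/3 \<le> exp (-0.402::real)" by linarith
  hence "ln (2/3) \<le> (-0.402::real)" by (metis exp_le_cancel_iff exp_ln zero_less_divide_iff zero_less_numeral)
  moreover have "ln (2/3::real) = - ln (3/2)" by (simp add: ln_div)
  ultimately show ?thesis by linarith
qed

lemma ln2: "ln (2::real) \<le> 0.75"
proof -
  have "(1 + 0.75 / real (8::nat)) ^ 8 \<le> exp (0.75::real)"
    by (rule exp_ge_one_plus_x_over_n_power_n) auto
  moreover have "(2::real) \<le> (1 + 0.75 / real (8::nat)) ^ 8" by (simp add: power_numeral_reduce)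
  ultimately have "2 \<le> exp (0.75::real)" by linarith
  thus ?thesis by (metis exp_le_cancel_iff exp_ln zero_less_numeral)
qed

lemma ln_ge_1m: "0 < (x::real) \<Longrightarrow> ln x \<ge> 1 - 1 / x"
  using ln_le_minus_one[of "1/x"] by (simp add: ln_div)

definition S :: "real \<Rightarrow> nat \<Rightarrow> real" where
  "S t0 n = (\<Sum>t\<in>{1..n}. min 1 (t0 / real t))"

lemma S_Suc: "S t0 (Suc n) = S t0 n + min 1 (t0 / real (Suc n))"
  unfolding S_def by (simp add: sum.cl_ivl_Suc)

lemma S_upper:
  assumes "t0 > 0"
  shows "S t0 n \<le> (if real n \<le> t0 then real n else t0 * (1 + ln (real n) - ln t0))"
proof (induction n)
  case 0
  then show ?case using assms by (simp add: S_def)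
next
  case (Suc n)
  show ?case
  proof (cases "real (Suc n) \<le> t0")
    case True
    then show ?thesis using Suc by (simp add: S_Suc)
  next
    case F: False
    show ?thesis
    proof (cases "real n \<le> t0")
      case True
      define s where "s = real (Suc n)"
      have s: "t0 < s" "s \<le> t0 + 1" using F True by (auto simp: s_def)
      have "ln (s / t0) \<ge> 1 - t0 / s"
        using ln_ge_1m[of "s/t0"] s assms by simp
      hence l: "ln s - ln t0 \<ge> 1 - t0 / s" using s assms by (simp add: ln_div)
      have "S t0 (Suc n) \<le> real n + t0 / s"
        using Suc True F by (simp add: S_Suc s_def)
      also have "\<dots> \<le> t0 * (1 + ln s - ln t0)"
      proof -
        have A: "t0 * (1 + ln s - ln t0) \<ge> t0 * (2 - t0 / s)"
          using l assms by (intro mult_left_mono) auto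
        have rn: "real n = s - 1" by (simp add: s_def)
        have sp: "s > 0" using s assms by linarith
        have "(s - t0) * (1 - (s - t0)) = s * (2 * t0 - (s - 1)) - t0 * t0 - t0"
          by (simp add: algebra_simps)
        hence "(s - t0) * (1 - (s - t0)) / s = (s * (2 * t0 - (s - 1)) - t0 * t0 - t0) / s" by simp
        also have "\<dots> = t0 * (2 - t0/s) - real n - t0/s" unfolding rn using sp by (simp add: field_simps)
        finally have "t0 * (2 - t0/s) - real n - t0/s = (s - t0) * (1 - (s - t0)) / s" by simp
        moreover note this
        moreover have "(s - t0) * (1 - (s - t0)) / s \<ge> 0" using s assms by auto
        ultimately show ?thesis using A by linarith
      qed
      finally show ?thesis using F by (simp add: s_def)
    next
      case False
      have n0: "real n > 0" using False assms by linarith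
      have "ln (real (Suc n) / real n) \<ge> 1 - real n / real (Suc n)"
        using ln_ge_1m[of "real (Suc n) / real n"] n0 by simp
      hence "ln (real (Suc n)) - ln (real n) \<ge> 1 / real (Suc n)"
        using n0 by (simp add: ln_div field_simps)
      hence "t0 * (ln (real (Suc n)) - ln (real n)) \<ge> t0 / real (Suc n)"
        using assms by (metis mult_left_mono less_imp_le times_divide_eq_right mult_1_right)
      moreover have "min 1 (t0 / real (Suc n)) = t0 / real (Suc n)" using F by simp
      ultimately show ?thesis using Suc False F by (simp add: S_Suc algebra_simps)
    qed
  qed
qed

lemma S_floor:
  assumes "t0 \<ge> 0"
  shows "S t0 (nat \<lfloor>t0\<rfloor>) = real (nat \<lfloor>t0\<rfloor>)"
proof -
  have "\<And>t. t \<in> {1..nat \<lfloor>t0\<rfloor>} \<Longrightarrow> min 1 (t0 / real t) = 1"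
  proof -
    fix t assume t: "t \<in> {1..nat \<lfloor>t0\<rfloor>}"
    hence "real t \<le> t0" using assms by (auto simp: le_nat_iff le_floor_iff)
    moreover have "real t \<ge> 1" using t by auto
    ultimately show "min 1 (t0 / real t) = 1" by (simp add: min_def field_simps)
  qed
  thus ?thesis unfolding S_def by simp
qed

lemma S_lower:
  assumes "t0 \<ge> 0" "m = nat \<lfloor>t0\<rfloor>" "m \<le> n"
  shows "S t0 n \<ge> real m + t0 * (ln (real n + 1) - ln (real m + 1))"
  using assms(3)
proof (induction n rule: dec_induct)
  case base
  then show ?case using S_floor assms by simp
next
  case (step n)
  have "\<lfloor>t0\<rfloor> \<le> int n" using step(1) assms by linarith
  hence "real_of_int \<lfloor>t0\<rfloor> \<le> real n" by (metis of_int_le_iff of_int_of_nat_eq)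
  hence lt: "t0 < real n + 1" using real_of_int_floor_add_one_gt[of t0] by linarith
  have e: "1 + 1 / (real n + 1) = (real (Suc n) + 1) / (real n + 1)" by (simp add: field_simps)
  have "ln (real (Suc n) + 1) - ln (real n + 1) = ln (1 + 1 / (real n + 1))"
    unfolding e by (subst ln_div) auto
  also have "\<dots> \<le> 1 / (real n + 1)" by (rule ln_add_one_self_le_self) simp
  finally have "t0 * (ln (real (Suc n) + 1) - ln (real n + 1)) \<le> t0 / (real n + 1)"
    using assms(1) by (metis mult_left_mono times_divide_eq_right mult_1_right)
  moreover have "min 1 (t0 / real (Suc n)) = t0 / (real n + 1)" using lt by (simp add: min_def field_simps)
  ultimately show ?case using step(3) by (simp add: S_Suc algebra_simps)
qed



lemma q_eq:
  assumes "finite K" "k \<in> K" "t0 \<ge> 0"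
  shows "pmf (eps_step K t0 t) (Some k) = min 1 (t0 / real t) / real (card K)"
proof -
  have p: "0 \<le> min 1 (t0 / real t)" "min 1 (t0 / real t) \<le> 1" using assms by auto
  have ne: "K \<noteq> {}" using assms by auto
  have "pmf (map_pmf Some (pmf_of_set K)) (Some k) = 1 / real (card K)"
    using assms ne by (simp add: pmf_map_inj')
  thus ?thesis unfolding eps_step_def pmf_bind using p by simp
qed

lemma markov_pmf:
  fixes p :: "'b pmf"
  assumes "integrable p Z" "\<And>x. Z x \<ge> 0"
  shows "measure_pmf.prob p {x. 1 \<le> Z x} \<le> measure_pmf.expectation p Z"
proof -
  have "measure_pmf.prob p {x. 1 \<le> Z x} = measure_pmf.expectation p (indicator {x. 1 \<le> Z x})"
    by simp
  also have "\<dots> \<le> measure_pmf.expectation p Z"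
    by (rule integral_mono) (use assms in \<open>auto simp: indicator_def intro!: measure_pmf.integrable_const_bound[where B=1]\<close>)
  finally show ?thesis .
qed

lemma n_count_sum:
  "real (n_count T k \<omega>) = (\<Sum>t\<in>{1..T}. (if \<omega> t = Some k then 1 else 0))"
  unfolding n_count_def by (simp add: sum.If_cases) (rule arg_cong[where f=card], auto)

lemma n_count_le: "n_count T k \<omega> \<le> T"
  unfolding n_count_def by (rule order.trans[OF card_mono[of "{1..T}"]]) auto

lemma integrable_fun_count:
  fixes g :: "nat \<Rightarrow> real"
  shows "integrable (measure_pmf p) (\<lambda>\<omega>. g (n_count T k \<omega>))"
proof (rule measure_pmf.integrable_const_bound[where B = "Max ((\<lambda>i. norm (g i)) ` {..T})"])
  show "AE x in measure_pmf p. norm (g (n_count T k x)) \<le> Max ((\<lambda>i. norm (g i)) ` {..T})"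
  proof (intro AE_I2)
    fix x
    have "n_count T k x \<in> {..T}" using n_count_le by auto
    thus "norm (g (n_count T k x)) \<le> Max ((\<lambda>i. norm (g i)) ` {..T})"
      by (intro Max_ge) auto
  qed
qed auto

lemma mgf_eq:
  assumes "finite K" "k \<in> K" "t0 \<ge> 0"
  shows "measure_pmf.expectation (eps_decay K t0 T) (\<lambda>\<omega>. exp (l * real (n_count T k \<omega>)))
       = (\<Prod>t\<in>{1..T}. 1 + min 1 (t0 / real t) / real (card K) * (exp l - 1))"
proof -
  define f where "f = (\<lambda>(t::nat) (v::'a option). exp (l * (if v = Some k then 1 else 0)))"
  have eq: "(\<lambda>\<omega>. exp (l * real (n_count T k \<omega>))) = (\<lambda>\<omega>. \<Prod>t\<in>{1..T}. f t (\<omega> t))"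
    by (auto simp: n_count_sum sum_distrib_left exp_sum f_def intro!: ext prod.cong)
  have "measure_pmf.expectation (eps_decay K t0 T) (\<lambda>\<omega>. \<Prod>t\<in>{1..T}. f t (\<omega> t))
      = (\<Prod>t\<in>{1..T}. measure_pmf.expectation (eps_step K t0 t) (f t))"
    unfolding eps_decay_def
  proof (rule expectation_prod_Pi_pmf)
    fix t assume "t \<in> {1..T}"
    show "integrable (measure_pmf (eps_step K t0 t)) (f t)"
      by (rule measure_pmf.integrable_const_bound[where B = "max 1 (exp l)"]) (auto simp: f_def)
  qed (auto simp: f_def)
  also have "\<dots> = (\<Prod>t\<in>{1..T}. 1 + min 1 (t0 / real t) / real (card K) * (exp l - 1))"
  proof (rule prod.cong)
    fix t assume "t \<in> {1..T}"
    have "f t = (\<lambda>v. 1 + (exp l - 1) * indicator {Some k} v)"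
      by (auto simp: f_def indicator_def)
    have i1: "integrable (measure_pmf (eps_step K t0 t)) (\<lambda>v. (1::real))" by simp
    have i2: "integrable (measure_pmf (eps_step K t0 t)) (\<lambda>v. (exp l - 1) * indicator {Some k} v :: real)"
      by (intro integrable_mult_right integrable_real_indicator) (auto simp flip: less_top)
    have "measure_pmf.expectation (eps_step K t0 t) (f t)
         = measure_pmf.expectation (eps_step K t0 t) (\<lambda>v. 1 + (exp l - 1) * indicator {Some k} v)"
      using \<open>f t = _\<close> by simp
    also have "\<dots> = 1 + measure_pmf.expectation (eps_step K t0 t) (\<lambda>v. (exp l - 1) * indicator {Some k} v)"
      using Bochner_Integration.integral_add[OF i1 i2] by simp
    also have "\<dots> = 1 + (exp l - 1) * measure_pmf.prob (eps_step K t0 t) {Some k}"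
      by simp
    finally have "measure_pmf.expectation (eps_step K t0 t) (f t)
         = 1 + (exp l - 1) * measure_pmf.prob (eps_step K t0 t) {Some k}" .
    also have "\<dots> = 1 + min 1 (t0 / real t) / real (card K) * (exp l - 1)"
      using q_eq[OF assms, of t] by (simp add: measure_pmf_single)
    finally show "measure_pmf.expectation (eps_step K t0 t) (f t) = \<dots>" .
  qed simp
  finally show ?thesis using eq by simp
qed

lemma mgf_le:
  assumes "finite K" "k \<in> K" "t0 \<ge> 0"
  shows "measure_pmf.expectation (eps_decay K t0 T) (\<lambda>\<omega>. exp (l * real (n_count T k \<omega>)))
       \<le> exp ((exp l - 1) * (S t0 T / real (card K)))"
proof -
  have "card K > 0" using assms by (auto simp: card_gt_0_iff)
  hence cK: "real (card K) \<ge> 1" by simp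
  have fac: "0 \<le> 1 + min 1 (t0 / real t) / real (card K) * (exp l - 1) \<and>
     1 + min 1 (t0 / real t) / real (card K) * (exp l - 1) \<le> exp (min 1 (t0 / real t) / real (card K) * (exp l - 1))"
    for t
  proof -
    define q where "q = min 1 (t0 / real t) / real (card K)"
    have m: "0 \<le> min 1 (t0 / real t)" "min 1 (t0 / real t) \<le> 1" using assms by auto
    have q: "0 \<le> q" "q \<le> 1" unfolding q_def using m cK
      by (simp_all add: divide_le_eq_1)
    have "0 \<le> (1 - q) + q * exp l" using q by (intro add_nonneg_nonneg) auto
    hence "0 \<le> 1 + q * (exp l - 1)" by (simp add: algebra_simps)
    moreover have "1 + q * (exp l - 1) \<le> exp (q * (exp l - 1))" by (rule exp_ge_add_one_self)
    ultimately show ?thesis unfolding q_def by blast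
  qed
  have "(\<Prod>t\<in>{1..T}. 1 + min 1 (t0 / real t) / real (card K) * (exp l - 1))
      \<le> (\<Prod>t\<in>{1..T}. exp (min 1 (t0 / real t) / real (card K) * (exp l - 1)))"
    by (rule prod_mono) (rule fac)
  also have "\<dots> = exp (\<Sum>t\<in>{1..T}. min 1 (t0 / real t) / real (card K) * (exp l - 1))"
    by (subst exp_sum) simp_all
  also have "(\<Sum>t\<in>{1..T}. min 1 (t0 / real t) / real (card K) * (exp l - 1))
      = (exp l - 1) * (S t0 T / real (card K))"
    unfolding S_def sum_distrib_right[symmetric] sum_divide_distrib[symmetric] by simp
  finally show ?thesis using mgf_eq[OF assms] by simp
qed



theorem proposition2:
  fixes K :: "'a set" and C0 t0 :: real and T :: nat and k :: 'a
  assumes "finite K"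
    and "C0 \<ge> 10"
    and "t0 = 2 * C0 * real (card K)"
    and "real T > (t0 + 1)^2 / (exp 1)^2"
    and "k \<in> K"
  shows "measure_pmf.prob (eps_decay K t0 T)
           {\<omega>. C0 * (1 + ln (real T + 1) - ln (t0 + 1)) \<le> real (n_count T k \<omega>) \<and>
                real (n_count T k \<omega>) \<le> 3 * C0 * (1 + ln (real T) - ln t0)}
         \<ge> 1 - 2 / (real T + 1)"
proof -
  define c where "c = real (card K)"
  define p where "p = eps_decay K t0 T"
  define X where "X = (\<lambda>\<omega>. real (n_count T k \<omega>))"
  define L where "L = 1 + ln (real T) - ln t0"
  define L' where "L' = 1 + ln (real T + 1) - ln (t0 + 1)"
  define \<mu> where "\<mu> = S t0 T / c"
  have "card K > 0" using assms(1,5) by (auto simp: card_gt_0_iff)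
  hence c1: "c \<ge> 1" unfolding c_def by simp
  have "C0 * 1 \<le> C0 * c" using c1 assms(2) by (intro mult_left_mono) auto
  moreover have "t0 = 2 * (C0 * c)" using assms(3) by (simp add: c_def)
  ultimately have t020: "t0 \<ge> 20" using assms(2) by linarith
  have e3: "exp 1 \<le> (3::real)" by (rule exp_le)
  have e0: "exp 1 > (0::real)" by simp
  have "(t0 + 1)^2 / (exp 1)^2 \<ge> (t0 + 1)^2 / 9"
  proof (rule divide_left_mono)
    have "(exp 1)^2 \<le> (3::real)^2" using e3 e0 by (intro power_mono) auto
    thus "(exp 1)^2 \<le> (9::real)" by simp
  qed (use e0 in auto)
  hence T9: "real T > (t0 + 1)^2 / 9" using assms(4) by linarith
  have "t0 * 7 \<le> t0 * t0" by (rule mult_left_mono) (use t020 in auto)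
  hence "(t0 + 1)^2 / 9 \<ge> t0" by (simp add: power2_eq_square field_simps)
  hence Tt0: "real T > t0" using T9 by linarith
  have "(21::real)^2 \<le> (t0 + 1)^2" using t020 by (intro power_mono) auto
  hence "441 \<le> (t0 + 1)^2" by (simp add: power2_eq_square)
  hence "(t0 + 1)^2 / 9 \<ge> 49" by (simp add: le_divide_eq)
  hence T49: "real T > 49" using T9 by linarith
  have t0p: "t0 > 0" using t020 by simp
  have Tp: "real T > 0" using T49 by simp
  have "(t0 + 1)^2 < (exp 1)^2 * real T" using assms(4) by (simp add: field_simps)
  hence "ln ((t0 + 1)^2) < ln ((exp 1)^2 * real T)" using t0p Tp by (subst ln_less_cancel_iff) auto
  hence key: "2 * ln (t0 + 1) < 2 + ln (real T)" using t0p Tp by (simp add: ln_mult ln_realpow)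
  have lnt0: "ln t0 < ln (t0 + 1)" using t0p by simp
  have LlnT: "L > ln (real T) / 2" unfolding L_def using key lnt0 by linarith
  have lnTT1: "ln (real T) \<le> ln (real T + 1)" using Tp by simp
  have L'lnT: "L' \<ge> ln (real T + 1) / 2" unfolding L'_def using key lnTT1 by linarith
  have lnT1: "ln (real T) \<ge> 1" using e3 T49 by (subst ln_ge_iff) auto
  have lnT2: "ln (real T + 1) \<ge> 2"
  proof -
    have "exp (2::real) = exp 1 ^ 2" by (simp add: exp_of_nat_mult[symmetric])
    also have "\<dots> \<le> 3 ^ 2" using e3 by (intro power_mono) auto
    finally have "exp 2 \<le> real T + 1" using T49 by simp
    thus ?thesis using Tp by (subst ln_ge_iff) auto
  qed
  have L0: "L \<ge> 0" using LlnT lnT1 by linarith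
  have L'0: "L' \<ge> 0" using L'lnT lnT2 by linarith
  have "S t0 T \<le> t0 * L" using S_upper[OF t0p, of T] Tt0 unfolding L_def by simp
  hence mu_up: "\<mu> \<le> 2 * C0 * L" unfolding \<mu>_def using c1 assms(3)
    by (simp add: c_def field_simps)
  define m where "m = nat \<lfloor>t0\<rfloor>"
  have mle: "real m \<le> t0" using t0p unfolding m_def by simp
  have mge: "real m \<ge> t0 - 1" using t0p unfolding m_def by linarith
  have "m \<le> T" using mle Tt0 by simp
  hence "S t0 T \<ge> real m + t0 * (ln (real T + 1) - ln (real m + 1))"
    using S_lower[of t0 m T] t0p m_def by simp
  moreover have "ln (real m + 1) \<le> ln (t0 + 1)" using mle by simp
  hence "t0 * (ln (real T + 1) - ln (real m + 1)) \<ge> t0 * (ln (real T + 1) - ln (t0 + 1))"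
    using t0p by (intro mult_left_mono) auto
  moreover have "t0 * L' = t0 + t0 * (ln (real T + 1) - ln (t0 + 1))"
    unfolding L'_def by (simp add: algebra_simps)
  ultimately have "S t0 T \<ge> t0 * L' - 1"
    using mge \<open>S t0 T \<ge> real m + t0 * (ln (real T + 1) - ln (real m + 1))\<close> by linarith
  hence mu_lo: "\<mu> \<ge> 2 * C0 * L' - 1" unfolding \<mu>_def using c1 assms(3)
    by (simp add: c_def field_simps)
  define a where "a = 3 * C0 * L"
  define lu where "lu = ln (3/2::real)"
  have lu0: "lu \<ge> 0.402" using ln15 unfolding lu_def by simp
  have "measure_pmf.prob p {\<omega>. a \<le> X \<omega>} = measure_pmf.prob p {\<omega>. 1 \<le> exp (lu * X \<omega> - lu * a)}"
  proof -
    have "\<And>\<omega>. (a \<le> X \<omega>) = (1 \<le> exp (lu * X \<omega> - lu * a))"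
      using lu0 by (simp add: mult_le_cancel_left_pos)
    thus ?thesis by simp
  qed
  also have "\<dots> \<le> measure_pmf.expectation p (\<lambda>\<omega>. exp (lu * X \<omega> - lu * a))"
    unfolding X_def by (rule markov_pmf) (auto intro: integrable_fun_count[where g = "\<lambda>n. exp (lu * real n - lu * a)"])
  also have "(\<lambda>\<omega>. exp (lu * X \<omega> - lu * a)) = (\<lambda>\<omega>. exp (- lu * a) * exp (lu * X \<omega>))"
    by (simp add: exp_add[symmetric])
  also have "measure_pmf.expectation p \<dots> = exp (- lu * a) * measure_pmf.expectation p (\<lambda>\<omega>. exp (lu * X \<omega>))"
    by (rule integral_mult_right_zero)
  also have "\<dots> \<le> exp (- lu * a) * exp ((exp lu - 1) * \<mu>)"
    unfolding p_def X_def \<mu>_def c_def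
    by (intro mult_left_mono mgf_le assms(1,5)) (use t0p in auto)
  also have "\<dots> = exp (\<mu> / 2 - lu * a)" unfolding lu_def by (simp add: exp_add[symmetric])
  also have "\<dots> \<le> exp (- ln (real T + 1))"
  proof -
    have "\<mu> / 2 - lu * a \<le> C0 * L - 0.402 * 3 * C0 * L"
    proof -
      have "0 \<le> 3 * C0 * L" using L0 assms(2) by simp
      hence "0.402 * (3 * C0 * L) \<le> lu * (3 * C0 * L)" using lu0 by (intro mult_right_mono) auto
      thus ?thesis using mu_up unfolding a_def by linarith
    qed
    also have "\<dots> = - 0.206 * (C0 * L)" by simp
    also have "\<dots> \<le> - 0.206 * (10 * L)" using L0 assms(2) by (simp add: mult_right_mono)
    also have "\<dots> \<le> - 1.03 * ln (real T)" using LlnT by simp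
    also have "\<dots> \<le> - ln (real T + 1)"
    proof -
      have e: "1 + 1 / real T = (real T + 1) / real T" using Tp by (simp add: field_simps)
      have "ln (real T + 1) - ln (real T) = ln (1 + 1 / real T)"
        unfolding e using Tp by (subst ln_div) auto
      also have "\<dots> \<le> 1 / real T" by (rule ln_add_one_self_le_self) simp
      also have "\<dots> \<le> 0.03" using T49 by (simp add: field_simps)
      finally show ?thesis using lnT1 by simp
    qed
    finally show ?thesis by simp
  qed
  also have "\<dots> = 1 / (real T + 1)" using Tp by (simp add: exp_minus exp_ln inverse_eq_divide)
  finally have hi: "measure_pmf.prob p {\<omega>. a \<le> X \<omega>} \<le> 1 / (real T + 1)" .
  define b where "b = C0 * L'"
  define ll where "ll = ln (2::real)"
  have ll0: "ll \<ge> 0" "ll \<le> 0.75" using ln2 unfolding ll_def by auto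
  have "measure_pmf.prob p {\<omega>. X \<omega> \<le> b} \<le> measure_pmf.prob p {\<omega>. 1 \<le> exp (ll * b - ll * X \<omega>)}"
  proof (rule measure_pmf.finite_measure_mono)
    show "{\<omega>. X \<omega> \<le> b} \<subseteq> {\<omega>. 1 \<le> exp (ll * b - ll * X \<omega>)}"
      using ll0 by (auto intro: mult_left_mono)
  qed simp
  also have "\<dots> \<le> measure_pmf.expectation p (\<lambda>\<omega>. exp (ll * b - ll * X \<omega>))"
    unfolding X_def by (rule markov_pmf) (auto intro: integrable_fun_count[where g = "\<lambda>n. exp (ll * b - ll * real n)"])
  also have "(\<lambda>\<omega>. exp (ll * b - ll * X \<omega>)) = (\<lambda>\<omega>. exp (ll * b) * exp ((- ll) * X \<omega>))"
    by (simp add: exp_add[symmetric])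
  also have "measure_pmf.expectation p \<dots> = exp (ll * b) * measure_pmf.expectation p (\<lambda>\<omega>. exp ((- ll) * X \<omega>))"
    by (rule integral_mult_right_zero)
  also have "\<dots> \<le> exp (ll * b) * exp ((exp (- ll) - 1) * \<mu>)"
    unfolding p_def X_def \<mu>_def c_def
    by (intro mult_left_mono mgf_le assms(1,5)) (use t0p in auto)
  also have "\<dots> = exp (ll * b - \<mu> / 2)"
  proof -
    have "(exp (- ll) - 1) * \<mu> = - (\<mu> / 2)" unfolding ll_def by (simp add: exp_minus)
    hence "exp (ll * b) * exp ((exp (- ll) - 1) * \<mu>) = exp (ll * b) * exp (- (\<mu> / 2))"
      by (simp only:)
    also have "\<dots> = exp (ll * b + - (\<mu> / 2))" by (rule exp_add[symmetric])
    finally show ?thesis by simp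
  qed
  also have "\<dots> \<le> exp (- ln (real T + 1))"
  proof -
    have "ll * b - \<mu> / 2 \<le> 0.75 * (C0 * L') - (C0 * L' - 1/2)"
    proof -
      have "0 \<le> C0 * L'" using L'0 assms(2) by simp
      hence "ll * (C0 * L') \<le> 0.75 * (C0 * L')" using ll0 by (intro mult_right_mono) auto
      thus ?thesis using mu_lo unfolding b_def by linarith
    qed
    also have "\<dots> = 1/2 - 0.25 * (C0 * L')" by simp
    also have "\<dots> \<le> 1/2 - 0.25 * (10 * L')" using L'0 assms(2) by (simp add: mult_right_mono)
    also have "\<dots> \<le> 1/2 - 1.25 * ln (real T + 1)" using L'lnT by simp
    also have "\<dots> \<le> - ln (real T + 1)" using lnT2 by simp
    finally show ?thesis by simp
  qed
  also have "\<dots> = 1 / (real T + 1)" using Tp by (simp add: exp_minus exp_ln inverse_eq_divide)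
  finally have lo: "measure_pmf.prob p {\<omega>. X \<omega> \<le> b} \<le> 1 / (real T + 1)" .
  define G where "G = {\<omega>. C0 * L' \<le> X \<omega> \<and> X \<omega> \<le> 3 * C0 * L}"
  have "UNIV - G \<subseteq> {\<omega>. X \<omega> \<le> b} \<union> {\<omega>. a \<le> X \<omega>}"
    unfolding G_def a_def b_def by auto
  hence "measure_pmf.prob p (UNIV - G) \<le> measure_pmf.prob p ({\<omega>. X \<omega> \<le> b} \<union> {\<omega>. a \<le> X \<omega>})"
    by (intro measure_pmf.finite_measure_mono) auto
  also have "\<dots> \<le> measure_pmf.prob p {\<omega>. X \<omega> \<le> b} + measure_pmf.prob p {\<omega>. a \<le> X \<omega>}"
    by (rule measure_subadditive) (auto simp: measure_pmf.emeasure_finite)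
  finally have "measure_pmf.prob p (UNIV - G) \<le> 2 / (real T + 1)" using lo hi by simp
  moreover have "measure_pmf.prob p (UNIV - G) = 1 - measure_pmf.prob p G"
    using measure_pmf.prob_compl[of G p] by simp
  ultimately have "measure_pmf.prob p G \<ge> 1 - 2 / (real T + 1)" by simp
  thus ?thesis unfolding G_def p_def X_def L_def L'_def by simp
qed

end
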